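(* Let $k_1,k_2,k_3,a_2,a_5$ be real constants with $(a_2,a_5)\neq(0,0)$, let $r=\sqrt{x^2+y^2}$, and consider the Newtonian system $\ddot x=-\partial_x V_3$, $\ddot y=-\partial_y V_3$ on the region of the plane where $r\neq0$ and $a_2y-a_5x\neq 0$, with potential $$V_3=\frac{k_1}{(a_2y-a_5x)^2}+\frac{k_2}{r}+\frac{k_3(a_2x+a_5y)}{r(a_2y-a_5x)^2}.$$ Then \begin{align*} J_3=&(x\dot y-y\dot x)^2(a_2\dot x+a_5\dot y)+\frac{2k_1r^2}{(a_2y-a_5x)^2}(a_2\dot x+a_5\dot y)-\frac{k_2(a_2y-a_5x)}{r}(x\dot y-y\dot x)\\ &+\frac{k_3r}{a_2y-a_5x}(a_2\dot y-a_5\dot x)-\frac{k_3(a_2x+a_5y)}{r(a_2y-a_5x)}(x\dot y-y\dot x)+\frac{2k_3(a_2x+a_5y)r}{(a_2y-a_5x)^2}(a_2\dot x+a_5\dot y) \end{align*} is constant along every solution. *)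

theory Defs
  imports "HOL-Analysis.Analysis"
begin

definition V3 :: "real \<Rightarrow> real \<Rightarrow> real \<Rightarrow> real \<Rightarrow> real \<Rightarrow> real \<Rightarrow> real \<Rightarrow> real" where
  "V3 k1 k2 k3 a2 a5 x y =
     k1 / (a2*y - a5*x)^2 + k2 / sqrt (x^2 + y^2)
     + k3 * (a2*x + a5*y) / (sqrt (x^2 + y^2) * (a2*y - a5*x)^2)"

definition J3 :: "real \<Rightarrow> real \<Rightarrow> real \<Rightarrow> real \<Rightarrow> real \<Rightarrow> real \<Rightarrow> real \<Rightarrow> real \<Rightarrow> real \<Rightarrow> real" where
  "J3 k1 k2 k3 a2 a5 x y xd yd =
    (let r = sqrt (x^2 + y^2); L = x*yd - y*xd; P = a2*xd + a5*yd; D = a2*y - a5*x in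
       L^2 * P + 2*k1*r^2 / D^2 * P - k2*D / r * L
     + k3*r / D * (a2*yd - a5*xd) - k3*(a2*x + a5*y) / (r*D) * L
     + 2*k3*(a2*x + a5*y)*r / D^2 * P)"

end

theory Submission
  imports Defs
begin

lemma Vx:
  fixes x y :: real
  assumes r: "x^2+y^2 > 0" and D: "a2*y - a5*x \<noteq> 0"
  shows "((\<lambda>u. V3 k1 k2 k3 a2 a5 u y) has_real_derivative
     (2*k1*a5/(a2*y-a5*x)^3 - k2*x/sqrt(x^2+y^2)^3
      + k3*(a2/(sqrt(x^2+y^2)*(a2*y-a5*x)^2) - (a2*x+a5*y)*x/(sqrt(x^2+y^2)^3*(a2*y-a5*x)^2)
            + 2*a5*(a2*x+a5*y)/(sqrt(x^2+y^2)*(a2*y-a5*x)^3)))) (at x)"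
proof -
  define s where "s = sqrt(x^2+y^2)"
  define d where "d = a2*y - a5*x"
  have s: "s > 0" using r by (simp add: s_def)
  show ?thesis
  unfolding V3_def
  apply (rule derivative_eq_intros refl | use r D in \<open>force\<close>)+
  apply (simp only: s_def[symmetric] d_def[symmetric])
  using s D[folded d_def] apply (simp add: field_simps)
  by algebra
qed

lemma Vy:
  fixes x y :: real
  assumes r: "x^2+y^2 > 0" and D: "a2*y - a5*x \<noteq> 0"
  shows "((\<lambda>v. V3 k1 k2 k3 a2 a5 x v) has_real_derivative
     (- 2*k1*a2/(a2*y-a5*x)^3 - k2*y/sqrt(x^2+y^2)^3
      + k3*(a5/(sqrt(x^2+y^2)*(a2*y-a5*x)^2) - (a2*x+a5*y)*y/(sqrt(x^2+y^2)^3*(a2*y-a5*x)^2)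
            - 2*a2*(a2*x+a5*y)/(sqrt(x^2+y^2)*(a2*y-a5*x)^3)))) (at y)"
proof -
  define s where "s = sqrt(x^2+y^2)"
  define d where "d = a2*y - a5*x"
  have s: "s > 0" using r by (simp add: s_def)
  show ?thesis
  unfolding V3_def
  apply (rule derivative_eq_intros refl | use r D in \<open>force\<close>)+
  apply (simp only: s_def[symmetric] d_def[symmetric])
  using s D[folded d_def] apply (simp add: field_simps)
  by algebra
qed

lemma alg:
  fixes S D P Q r L \<rho> n k1 k2 k3 :: real
  assumes r: "r > 0" and D: "D \<noteq> 0" and n: "n > 0"
    and h1: "S^2 + D^2 = n * r^2" and h2: "S*P + D*Q = n*\<rho>" and h3: "S*Q - D*P = n*L"
  shows "let M = -2*k1*S/D^3 - k3*(D^2+2*S^2)/(r*D^3);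
             N1 = -k2*S/r^3 + k3*(n/(r*D^2) - S^2/(r^3*D^2));
             N2 = -2*k1*n/D^3 - k2*D/r^3 + k3*(-S*D/(r^3*D^2) - 2*n*S/(r*D^3)) in
     (-2*L*M*P-L^2*N1) + 2*k1*(2*\<rho>*P/D^2-r^2*N1/D^2-2*r^2*P*Q/D^3)
     - k2*(Q*L/r-D*M/r-D*L*\<rho>/r^3) + k3*(\<rho>*Q/(r*D)-r*N2/D-r*Q^2/D^2)
     - k3*(P*L/(r*D)-S*M/(r*D)-S*L*\<rho>/(r^3*D)-S*L*Q/(r*D^2))
     + 2*k3*(P^2*r/D^2+S*\<rho>*P/(r*D^2)-S*r*N1/D^2-2*S*r*P*Q/D^3) = 0"
proof -
  have L: "L = (S*Q - D*P)/n" using h3 n by (simp add: field_simps)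
  have R: "\<rho> = (S*P + D*Q)/n" using h2 n by (simp add: field_simps)
  have r2: "r^2 = (S^2+D^2)/n" using h1 n by (simp add: field_simps)
  show ?thesis unfolding Let_def L R
    using r D n r2
    apply (simp add: field_simps)
    apply algebra
    done
qed

lemma alg2:
  fixes S D P Q R L \<rho> n k1 k2 k3 e i M N1 N2 :: real
  assumes r: "R > 0" and D: "D \<noteq> 0" and n: "n > 0"
    and h1: "S^2 + D^2 = n * R^2" and h2: "S*P + D*Q = n*\<rho>" and h3: "S*Q - D*P = n*L"
    and e: "e = 1/D" and i: "i = 1/R"
    and M: "M = -2*k1*S/D^3 - k3*(D^2+2*S^2)/(R*D^3)"
    and N1: "N1 = -k2*S/R^3 + k3*(n/(R*D^2) - S^2/(R^3*D^2))"
    and N2: "N2 = -2*k1*n/D^3 - k2*D/R^3 + k3*(-S*D/(R^3*D^2) - 2*n*S/(R*D^3))"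
  shows "(-2*L*M*P-L^2*N1) + 2*k1*(2*\<rho>*P*e^2-R^2*N1*e^2-2*R^2*P*Q*e^3)
     - k2*(Q*L*i-D*M*i-D*L*\<rho>*i^3) + k3*(\<rho>*Q*i*e-R*N2*e-R*Q^2*e^2)
     - k3*(P*L*i*e-S*M*i*e-S*L*\<rho>*i^3*e-S*L*Q*i*e^2)
     + 2*k3*(P^2*R*e^2+S*\<rho>*P*i*e^2-S*R*N1*e^2-2*S*R*P*Q*e^3) = 0"
  using alg[where ?k1.0=k1 and ?k2.0=k2 and ?k3.0=k3, OF r D n h1 h2 h3] unfolding e i Let_def M N1 N2
  by (simp only: power_one_over times_divide_eq_right times_divide_eq_left divide_divide_eq_left mult_1_right mult_1_left)

lemma lemM:
  fixes X Y s d a2 a5 k1 k2 k3 VX VY :: real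
  assumes "s > 0" "d \<noteq> 0" "d = a2*Y - a5*X" "S = a2*X+a5*Y"
   and "VX = 2*k1*a5/d^3 - k2*X/s^3 + k3*(a2/(s*d^2) - (a2*X+a5*Y)*X/(s^3*d^2) + 2*a5*(a2*X+a5*Y)/(s*d^3))"
   and "VY = - 2*k1*a2/d^3 - k2*Y/s^3 + k3*(a5/(s*d^2) - (a2*X+a5*Y)*Y/(s^3*d^2) - 2*a2*(a2*X+a5*Y)/(s*d^3))"
  shows "X*VY - Y*VX = -2*k1*S/d^3 - k3*(d^2+2*S^2)/(s*d^3)"
proof -
  show ?thesis unfolding assms(4-6)
    using assms(1,2) apply (simp add: field_simps)
    using assms(3) by algebra
qed

lemma lemN1:
  fixes X Y s d a2 a5 k1 k2 k3 VX VY :: real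
  assumes "s > 0" "d \<noteq> 0" "d = a2*Y - a5*X" "S = a2*X+a5*Y" "n = a2^2+a5^2"
   and "VX = 2*k1*a5/d^3 - k2*X/s^3 + k3*(a2/(s*d^2) - (a2*X+a5*Y)*X/(s^3*d^2) + 2*a5*(a2*X+a5*Y)/(s*d^3))"
   and "VY = - 2*k1*a2/d^3 - k2*Y/s^3 + k3*(a5/(s*d^2) - (a2*X+a5*Y)*Y/(s^3*d^2) - 2*a2*(a2*X+a5*Y)/(s*d^3))"
  shows "a2*VX + a5*VY = -k2*S/s^3 + k3*(n/(s*d^2) - S^2/(s^3*d^2))"
  unfolding assms(4-7)
  using assms(1,2) apply (simp add: field_simps)
  by algebra

lemma lemN2:
  fixes X Y s d a2 a5 k1 k2 k3 VX VY :: real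
  assumes "s > 0" "d \<noteq> 0" "d = a2*Y - a5*X" "S = a2*X+a5*Y" "n = a2^2+a5^2"
   and "VX = 2*k1*a5/d^3 - k2*X/s^3 + k3*(a2/(s*d^2) - (a2*X+a5*Y)*X/(s^3*d^2) + 2*a5*(a2*X+a5*Y)/(s*d^3))"
   and "VY = - 2*k1*a2/d^3 - k2*Y/s^3 + k3*(a5/(s*d^2) - (a2*X+a5*Y)*Y/(s^3*d^2) - 2*a2*(a2*X+a5*Y)/(s*d^3))"
  shows "a2*VY - a5*VX = -2*k1*n/d^3 - k2*d/s^3 + k3*(-S*d/(s^3*d^2) - 2*n*S/(s*d^3))"
proof -
  show ?thesis unfolding assms(4-7)
    using assms(1,2) apply (simp add: field_simps)
    using assms(3) by algebra
qed
lemma hlp: fixes s a b :: real shows "inverse s / 2 * (2*a + 2*b) = (a + b) * (1 / s)"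
  by (cases "s = 0") (simp_all add: field_simps)

lemma jh: fixes r D L P Q S k1 k2 k3 :: real shows
 "L^2*P + 2*k1*r^2/D^2*P - k2*D/r*L + k3*r/D*Q - k3*S/(r*D)*L + 2*k3*S*r/D^2*P
  = L^2*P + 2*k1*r^2*P*(1/D)^2 - k2*D*L*(1/r) + k3*r*Q*(1/D) - k3*S*L*(1/r)*(1/D) + 2*k3*S*r*P*(1/D)^2"
  by (simp add: divide_inverse power_inverse algebra_simps)

lemma derivJ:
  fixes Lf Pf Qf Sf Df Rf Ef If :: "real \<Rightarrow> real" and t M N1 N2 P Q \<rho> :: real
  assumes hS: "(Sf has_real_derivative P) (at t)" and hD: "(Df has_real_derivative Q) (at t)"
  and hR: "(Rf has_real_derivative \<rho>*If t) (at t)" and hL: "(Lf has_real_derivative -M) (at t)"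
  and hP: "(Pf has_real_derivative -N1) (at t)" and hQ: "(Qf has_real_derivative -N2) (at t)"
  and hE: "(Ef has_real_derivative -Q*(Ef t)^2) (at t)"
  and hI: "(If has_real_derivative -\<rho>*(If t)^3) (at t)"
  and Ri: "If t * Rf t = 1" and PP: "P = Pf t" and QQ: "Q = Qf t"
  shows "((\<lambda>t. (Lf t)^2 * Pf t + 2*k1*(Rf t)^2 * Pf t*(Ef t)^2 - k2*Df t * Lf t * If t
     + k3*Rf t * Qf t * Ef t - k3*Sf t * Lf t * If t * Ef t
     + 2*k3*Sf t*Rf t * Pf t * (Ef t)^2) has_real_derivative 
     (-2*Lf t*M*P-(Lf t)^2*N1) + 2*k1*(2*\<rho>*P*(Ef t)^2-(Rf t)^2*N1*(Ef t)^2-2*(Rf t)^2*P*Q*(Ef t)^3)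
     - k2*(Q*Lf t*If t-Df t*M*If t-Df t*Lf t*\<rho>*(If t)^3) + k3*(\<rho>*Q*If t*Ef t-Rf t*N2*Ef t-Rf t*Q^2*(Ef t)^2)
     - k3*(P*Lf t*If t*Ef t-Sf t*M*If t*Ef t-Sf t*Lf t*\<rho>*(If t)^3*Ef t-Sf t*Lf t*Q*If t*(Ef t)^2)
     + 2*k3*(P^2*Rf t*(Ef t)^2+Sf t*\<rho>*P*If t*(Ef t)^2-Sf t*Rf t*N1*(Ef t)^2-2*Sf t*Rf t*P*Q*(Ef t)^3)) (at t)"
  apply (rule derivative_eq_intros refl hS hD hR hL hP hQ hE hI)+
  unfolding PP QQ
  using Ri apply (simp add: algebra_simps power2_eq_square power3_eq_cube)
  done
theorem mainTheorem6:
  fixes k1 k2 k3 a2 a5 :: real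
    and x y xd yd :: "real \<Rightarrow> real" and I :: "real set"
  assumes "(a2, a5) \<noteq> (0, 0)"
    and "open I" and "is_interval I"
    and "\<And>t. t \<in> I \<Longrightarrow> sqrt ((x t)^2 + (y t)^2) \<noteq> 0"
    and "\<And>t. t \<in> I \<Longrightarrow> a2 * y t - a5 * x t \<noteq> 0"
    and "\<And>t. t \<in> I \<Longrightarrow> (x has_real_derivative xd t) (at t)"
    and "\<And>t. t \<in> I \<Longrightarrow> (y has_real_derivative yd t) (at t)"
    and "\<And>t. t \<in> I \<Longrightarrow>
           (xd has_real_derivative - deriv (\<lambda>u. V3 k1 k2 k3 a2 a5 u (y t)) (x t)) (at t)"
    and "\<And>t. t \<in> I \<Longrightarrow>
           (yd has_real_derivative - deriv (\<lambda>v. V3 k1 k2 k3 a2 a5 (x t) v) (y t)) (at t)"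
    and "s \<in> I" and "t \<in> I"
  shows "J3 k1 k2 k3 a2 a5 (x s) (y s) (xd s) (yd s) = J3 k1 k2 k3 a2 a5 (x t) (y t) (xd t) (yd t)"
  proof -
  have n: "a2^2 + a5^2 > 0" using assms(1) by (auto simp: sum_power2_gt_zero_iff)
  define Sf where "Sf = (\<lambda>t. a2 * x t + a5 * y t)"
  define Df where "Df = (\<lambda>t. a2 * y t - a5 * x t)"
  define Pf where "Pf = (\<lambda>t. a2 * xd t + a5 * yd t)"
  define Qf where "Qf = (\<lambda>t. a2 * yd t - a5 * xd t)"
  define Lf where "Lf = (\<lambda>t. x t * yd t - y t * xd t)"
  define Rf where "Rf = (\<lambda>t. sqrt ((x t)^2 + (y t)^2))"
  define Ef where "Ef = (\<lambda>t. 1 / Df t)"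
  define If where "If = (\<lambda>t. 1 / Rf t)"
  define rho where "rho = (\<lambda>t. x t * xd t + y t * yd t)"
  define nn where "nn = a2^2 + a5^2"
  have Jeq: "(\<lambda>t. J3 k1 k2 k3 a2 a5 (x t) (y t) (xd t) (yd t)) =
    (\<lambda>t. (Lf t)^2 * Pf t + 2*k1*(Rf t)^2 * Pf t*(Ef t)^2 - k2*Df t * Lf t * If t
     + k3*Rf t * Qf t * Ef t - k3*Sf t * Lf t * If t * Ef t
     + 2*k3*Sf t*Rf t * Pf t * (Ef t)^2)"
    unfolding J3_def Let_def Sf_def Df_def Pf_def Qf_def Lf_def Rf_def Ef_def If_def
    by (rule ext, rule jh)
  have D0: "((\<lambda>t. J3 k1 k2 k3 a2 a5 (x t) (y t) (xd t) (yd t)) has_real_derivative 0) (at t)"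
    if t: "t \<in> I" for t
  proof -
    have r: "(x t)^2 + (y t)^2 > 0" using assms(4)[OF t]
      by (metis add_nonneg_nonneg le_less real_sqrt_zero zero_le_power2)
    have D: "a2 * y t - a5 * x t \<noteq> 0" using assms(5)[OF t] .
    note hx = assms(6)[OF t] and hy = assms(7)[OF t]
    note hxd = assms(8)[OF t, unfolded DERIV_imp_deriv[OF Vx[OF r D]]]
    note hyd = assms(9)[OF t, unfolded DERIV_imp_deriv[OF Vy[OF r D]]]
    define S where "S = Sf t"
    define DD where "DD = Df t"
    define P where "P = Pf t"
    define Q where "Q = Qf t"
    define L where "L = Lf t"
    define R where "R = Rf t"
    define e where "e = Ef t"
    define i where "i = If t"
    define \<rho> where "\<rho> = rho t"
    define M where "M = -2*k1*S/DD^3 - k3*(DD^2+2*S^2)/(R*DD^3)"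
    define N1 where "N1 = -k2*S/R^3 + k3*(nn/(R*DD^2) - S^2/(R^3*DD^2))"
    define N2 where "N2 = -2*k1*nn/DD^3 - k2*DD/R^3 + k3*(-S*DD/(R^3*DD^2) - 2*nn*S/(R*DD^3))"
    define VX where "VX = 2*k1*a5/DD^3 - k2*x t/R^3 + k3*(a2/(R*DD^2) - (a2*x t+a5*y t)*x t/(R^3*DD^2) + 2*a5*(a2*x t+a5*y t)/(R*DD^3))"
    define VY where "VY = - 2*k1*a2/DD^3 - k2*y t/R^3 + k3*(a5/(R*DD^2) - (a2*x t+a5*y t)*y t/(R^3*DD^2) - 2*a2*(a2*x t+a5*y t)/(R*DD^3))"
    have Rp: "R > 0" using r by (simp add: R_def Rf_def)
    have R2: "R^2 = (x t)^2 + (y t)^2" by (simp add: R_def Rf_def)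
    have DDn: "DD \<noteq> 0" using D by (simp add: DD_def Df_def)
    have Rs: "sqrt ((x t)^2 + (y t)^2) = R" by (simp add: R_def Rf_def)
    have Ds: "a2 * y t - a5 * x t = DD" by (simp add: DD_def Df_def)
    have Dr: "DD = a2 * y t - a5 * x t" by (simp add: DD_def Df_def)
    have Sr: "S = a2 * x t + a5 * y t" by (simp add: S_def Sf_def)
    have hxd': "(xd has_real_derivative -VX) (at t)" using hxd unfolding VX_def Rs Ds .
    have hyd': "(yd has_real_derivative -VY) (at t)" using hyd unfolding VY_def Rs Ds .
    have hS: "(Sf has_real_derivative P) (at t)" unfolding Sf_def P_def Pf_def
      by (rule derivative_eq_intros refl hx hy)+ simp
    have hD: "(Df has_real_derivative Q) (at t)" unfolding Df_def Q_def Qf_def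
      by (rule derivative_eq_intros refl hx hy)+ simp
    have inner: "((\<lambda>t. (x t)^2 + (y t)^2) has_real_derivative 2*(x t*xd t) + 2*(y t*yd t)) (at t)"
      by (rule derivative_eq_intros refl hx hy)+ simp
    have hR: "(Rf has_real_derivative \<rho> * If t) (at t)" unfolding Rf_def
      apply (rule DERIV_cong[OF DERIV_chain2[OF DERIV_real_sqrt[OF r] inner]])
      unfolding \<rho>_def rho_def If_def Rf_def by (rule hlp)
    have DDn': "Df t \<noteq> 0" using DDn by (simp add: DD_def)
    have Rp': "Rf t > 0" using Rp by (simp add: R_def)
    have hE: "(Ef has_real_derivative -Q*(Ef t)^2) (at t)" unfolding Ef_def
      apply (rule derivative_eq_intros refl hD)+
       apply (rule DDn')
      using DDn' by (simp add: field_simps power2_eq_square)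
    have hI: "(If has_real_derivative -\<rho>*(If t)^3) (at t)" unfolding If_def
      apply (rule derivative_eq_intros refl hR)+
       using Rp' apply simp
      using Rp' by (simp add: If_def field_simps power3_eq_cube)
    have lm: "x t * VY - y t * VX = M"
      using lemM[OF Rp DDn Dr Sr VX_def VY_def] by (simp add: M_def)
    have hL: "(Lf has_real_derivative -M) (at t)" unfolding Lf_def
      apply (rule DERIV_cong[OF DERIV_diff[OF DERIV_mult[OF hx hyd'] DERIV_mult[OF hy hxd']]])
      by (simp add: lm[symmetric] algebra_simps)
    have ln1: "a2 * VX + a5 * VY = N1"
      using lemN1[OF Rp DDn Dr Sr nn_def VX_def VY_def] by (simp add: N1_def)
    have hP: "(Pf has_real_derivative -N1) (at t)" unfolding Pf_def
      apply (rule DERIV_cong[OF DERIV_add[OF DERIV_cmult[OF hxd'] DERIV_cmult[OF hyd']]])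
      by (simp add: ln1[symmetric] algebra_simps)
    have ln2: "a2 * VY - a5 * VX = N2"
      using lemN2[OF Rp DDn Dr Sr nn_def VX_def VY_def] by (simp add: N2_def)
    have hQ: "(Qf has_real_derivative -N2) (at t)" unfolding Qf_def
      apply (rule DERIV_cong[OF DERIV_diff[OF DERIV_cmult[OF hyd'] DERIV_cmult[OF hxd']]])
      by (simp add: ln2[symmetric] algebra_simps)
    have Ri: "If t * Rf t = 1" using Rp by (simp add: If_def R_def)
    have h1: "S^2 + DD^2 = nn * R^2" unfolding R2
      by (simp add: S_def DD_def Sf_def Df_def nn_def) algebra
    have h2: "S*P + DD*Q = nn*\<rho>"
      by (simp add: S_def DD_def Sf_def Df_def P_def Q_def Pf_def Qf_def \<rho>_def rho_def nn_def) algebra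
    have h3: "S*Q - DD*P = nn*L"
      by (simp add: S_def DD_def Sf_def Df_def P_def Q_def Pf_def Qf_def L_def Lf_def nn_def) algebra
    have ee: "e = 1/DD" by (simp add: e_def Ef_def DD_def)
    have ii: "i = 1/R" by (simp add: i_def If_def R_def)
    note dJ = derivJ[OF hS hD hR hL hP hQ hE hI Ri P_def Q_def, where ?k1.0=k1 and ?k2.0=k2 and ?k3.0=k3,
        folded S_def DD_def R_def L_def e_def i_def]
    note Z = alg2[OF Rp DDn n[folded nn_def] h1 h2 h3 ee ii M_def N1_def N2_def]
    show ?thesis unfolding Jeq
      by (rule DERIV_cong[OF dJ Z])
  qed
  have cv: "convex I" using assms(3) by (simp add: is_interval_convex)
  obtain c where "\<forall>u\<in>I. J3 k1 k2 k3 a2 a5 (x u) (y u) (xd u) (yd u) = c"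
    using has_field_derivative_zero_constant[OF cv, of "\<lambda>t. J3 k1 k2 k3 a2 a5 (x t) (y t) (xd t) (yd t)"]
      D0 has_field_derivative_at_within by blast
  then show ?thesis using assms(10,11) by simp
qed

end
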